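(* Let $\mathbf C$ be a clone $\tau$-algebra and $c\in C$. If $c$ is $n$-central for some $n$, then for every $m\ge1$: $c$ is $m$-central if and only if $m\ge\gamma(c)$.
   Context: A clone $\tau$-algebra is an algebra $\mathbf C=(C,\sigma^{\mathbf C}\ (\sigma\in\tau),q_n^{\mathbf C}\ (n\ge0),\mathsf e_i^{\mathbf C}\ (i\ge1))$ with $\mathsf e_i$ nullary, $q_n$ of arity $n+1$, satisfying: (C1) $q_n(\mathsf e_i,x_1,\dots,x_n)=x_i$ ($1\le i\le n$); (C2) $q_n(\mathsf e_j,x_1,\dots,x_n)=\mathsf e_j$ ($j>n$); (C3) $q_n(x,\mathsf e_1,\dots,\mathsf e_n)=x$; (C4) $q_k(x,y_1,\dots,y_k)=q_n(x,y_1,\dots,y_k,\mathsf e_{k+1},\dots,\mathsf e_n)$ ($n>k$); (C5) $q_n(q_n(x,\mathbf y),\mathbf z)=q_n(x,q_n(y_1,\mathbf z),\dots,q_n(y_n,\mathbf z))$; (C6) $q_n(\sigma(x_1,\dots,x_k),\mathbf y)=\sigma(q_n(x_1,\mathbf y),\dots,q_n(x_k,\mathbf y))$ for $\sigma\in\tau$ of arity $k$. An element $a$ is independent of $\mathsf e_n$ if $q_n(a,\mathsf e_1,\dots,\mathsf e_{n-1},\mathsf e_{n+1})=a$, dependent otherwise; $\gamma(a)$ is $\omega$ if $a$ depends on infinitely many $\mathsf e_i$, $0$ if on none, otherwise the largest $i$ with $a$ dependent on $\mathsf e_i$. For $a,b\in C$, $\theta(a,b)$ is the smallest congruence of $\mathbf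 C$ containing $(a,b)$. An element $c$ is $n$-central if $\theta(c,\mathsf e_1),\dots,\theta(c,\mathsf e_n)$ is an $n$-tuple of complementary factor congruences, i.e. $\bigcap_i\theta(c,\mathsf e_i)$ is the identity relation and for all $a_1,\dots,a_n\in C$ there is a unique $u\in C$ with $a_i\,\theta(c,\mathsf e_i)\,u$ for all $i$; equivalently, $(a_1,\dots,a_n)\mapsto q_n(c,a_1,\dots,a_n)$ is a homomorphism $\mathbf C^n\to\mathbf C$ satisfying $q_n(c,x,\dots,x)=x$ and $q_n(c,q_n(c,x_{11},\dots,x_{1n}),\dots,q_n(c,x_{n1},\dots,x_{nn}))=q_n(c,x_{11},\dots,x_{nn})$. *)

theory Defs
  imports Main "HOL-Library.Extended_Nat"
begin

text \<open>The signature tau is given by a type 's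
  of operation symbols with arity function ar; sig s xs interprets symbol s on the
  argument list xs (of length ar s).  q n x ys is q_n(x, y_1, ..., y_n) with
  ys = [y_1, ..., y_n]; e i is the nullary constant e_i (i >= 1; e 0 is unused).\<close>

definition clone_algebra ::
  "'a set \<Rightarrow> ('s \<Rightarrow> nat) \<Rightarrow> ('s \<Rightarrow> 'a list \<Rightarrow> 'a) \<Rightarrow> (nat \<Rightarrow> 'a \<Rightarrow> 'a list \<Rightarrow> 'a) \<Rightarrow> (nat \<Rightarrow> 'a) \<Rightarrow> bool"
  where
  "clone_algebra C ar sig q e \<longleftrightarrow>
     (\<forall>i\<ge>1. e i \<in> C)
   \<and> (\<forall>s xs. length xs = ar s \<and> set xs \<subseteq> C \<longrightarrow> sig s xs \<in> C)
   \<and> (\<forall>n x ys. x \<in> C \<and> length ys = n \<and> set ys \<subseteq> C \<longrightarrow> q n x ys \<in> C)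
   \<comment> \<open>(C1)\<close>
   \<and> (\<forall>n i xs. length xs = n \<and> set xs \<subseteq> C \<and> 1 \<le> i \<and> i \<le> n \<longrightarrow> q n (e i) xs = xs ! (i - 1))
   \<comment> \<open>(C2)\<close>
   \<and> (\<forall>n j xs. length xs = n \<and> set xs \<subseteq> C \<and> j > n \<longrightarrow> q n (e j) xs = e j)
   \<comment> \<open>(C3)\<close>
   \<and> (\<forall>n x. x \<in> C \<longrightarrow> q n x (map e [1..<n+1]) = x)
   \<comment> \<open>(C4)\<close>
   \<and> (\<forall>n k x ys. n > k \<and> x \<in> C \<and> length ys = k \<and> set ys \<subseteq> C \<longrightarrow>
          q k x ys = q n x (ys @ map e [k+1..<n+1]))
   \<comment> \<open>(C5)\<close>
   \<and> (\<forall>n x ys zs. x \<in> C \<and> length ys = n \<and> set ys \<subseteq> C \<and> length zs = n \<and> set zs \<subseteq> C \<longrightarrow>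
          q n (q n x ys) zs = q n x (map (\<lambda>y. q n y zs) ys))
   \<comment> \<open>(C6)\<close>
   \<and> (\<forall>n s xs ys. length xs = ar s \<and> set xs \<subseteq> C \<and> length ys = n \<and> set ys \<subseteq> C \<longrightarrow>
          q n (sig s xs) ys = sig s (map (\<lambda>x. q n x ys) xs))"

text \<open>Congruences of the full algebra (all operations sigma, q_n and the constants e_i;
  compatibility with nullary operations is automatic).\<close>

definition is_congruence ::
  "'a set \<Rightarrow> ('s \<Rightarrow> nat) \<Rightarrow> ('s \<Rightarrow> 'a list \<Rightarrow> 'a) \<Rightarrow> (nat \<Rightarrow> 'a \<Rightarrow> 'a list \<Rightarrow> 'a) \<Rightarrow> ('a \<times> 'a) set \<Rightarrow> bool"
  where
  "is_congruence C ar sig q \<theta> \<longleftrightarrow>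
     equiv C \<theta>
   \<and> (\<forall>s xs ys. length xs = ar s \<and> length ys = ar s \<and> set xs \<subseteq> C \<and> set ys \<subseteq> C
          \<and> list_all2 (\<lambda>x y. (x, y) \<in> \<theta>) xs ys \<longrightarrow> (sig s xs, sig s ys) \<in> \<theta>)
   \<and> (\<forall>n x y xs ys. x \<in> C \<and> y \<in> C \<and> (x, y) \<in> \<theta> \<and> length xs = n \<and> length ys = n
          \<and> set xs \<subseteq> C \<and> set ys \<subseteq> C \<and> list_all2 (\<lambda>x y. (x, y) \<in> \<theta>) xs ys
          \<longrightarrow> (q n x xs, q n y ys) \<in> \<theta>)"

definition cg ::
  "'a set \<Rightarrow> ('s \<Rightarrow> nat) \<Rightarrow> ('s \<Rightarrow> 'a list \<Rightarrow> 'a) \<Rightarrow> (nat \<Rightarrow> 'a \<Rightarrow> 'a list \<Rightarrow> 'a) \<Rightarrow> 'a \<Rightarrow> 'a \<Rightarrow> ('a \<times> 'a) set"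
  where
  "cg C ar sig q a b = \<Inter> {\<theta>. is_congruence C ar sig q \<theta> \<and> (a, b) \<in> \<theta>}"

definition independent :: "(nat \<Rightarrow> 'a \<Rightarrow> 'a list \<Rightarrow> 'a) \<Rightarrow> (nat \<Rightarrow> 'a) \<Rightarrow> 'a \<Rightarrow> nat \<Rightarrow> bool"
  where
  "independent q e a n \<longleftrightarrow> q n a (map e [1..<n] @ [e (n + 1)]) = a"

definition dep_set :: "(nat \<Rightarrow> 'a \<Rightarrow> 'a list \<Rightarrow> 'a) \<Rightarrow> (nat \<Rightarrow> 'a) \<Rightarrow> 'a \<Rightarrow> nat set"
  where
  "dep_set q e a = {n. 1 \<le> n \<and> \<not> independent q e a n}"

definition gamma :: "(nat \<Rightarrow> 'a \<Rightarrow> 'a list \<Rightarrow> 'a) \<Rightarrow> (nat \<Rightarrow> 'a) \<Rightarrow> 'a \<Rightarrow> enat"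
  where
  "gamma q e a =
     (if infinite (dep_set q e a) then \<infinity>
      else if dep_set q e a = {} then 0
      else enat (Max (dep_set q e a)))"

text \<open>c is n-central: theta(c,e_1), ..., theta(c,e_n) is an n-tuple of complementary factor
  congruences: their intersection is the identity on C, and for all a_1..a_n in C there is a
  unique u in C with a_i theta(c,e_i) u for all i.\<close>

definition n_central ::
  "'a set \<Rightarrow> ('s \<Rightarrow> nat) \<Rightarrow> ('s \<Rightarrow> 'a list \<Rightarrow> 'a) \<Rightarrow> (nat \<Rightarrow> 'a \<Rightarrow> 'a list \<Rightarrow> 'a) \<Rightarrow> (nat \<Rightarrow> 'a) \<Rightarrow> 'a \<Rightarrow> nat \<Rightarrow> bool"
  where
  "n_central C ar sig q e c n \<longleftrightarrow>
     c \<in> C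
   \<and> (\<forall>x\<in>C. \<forall>y\<in>C. (\<forall>i\<in>{1..n}. (x, y) \<in> cg C ar sig q c (e i)) \<longrightarrow> x = y)
   \<and> (\<forall>as. length as = n \<and> set as \<subseteq> C \<longrightarrow>
        (\<exists>!u. u \<in> C \<and> (\<forall>i\<in>{1..n}. (as ! (i - 1), u) \<in> cg C ar sig q c (e i))))"

end

theory Submission
  imports Defs
begin

lemma ca_parts:
  assumes "clone_algebra C ar sig q e"
  shows "\<forall>i\<ge>1. e i \<in> C"
  and "\<forall>n x ys. x \<in> C \<and> length ys = n \<and> set ys \<subseteq> C \<longrightarrow> q n x ys \<in> C"
  and "\<forall>n i xs. length xs = n \<and> set xs \<subseteq> C \<and> 1 \<le> i \<and> i \<le> n \<longrightarrow> q n (e i) xs = xs ! (i - 1)"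
  and "\<forall>n k x ys. n > k \<and> x \<in> C \<and> length ys = k \<and> set ys \<subseteq> C \<longrightarrow>
          q k x ys = q n x (ys @ map e [k+1..<n+1])"
  and "\<forall>n x ys zs. x \<in> C \<and> length ys = n \<and> set ys \<subseteq> C \<and> length zs = n \<and> set zs \<subseteq> C \<longrightarrow>
          q n (q n x ys) zs = q n x (map (\<lambda>y. q n y zs) ys)"
  using assms unfolding clone_algebra_def apply - by (elim conjE, assumption)+

lemma ca_e: "clone_algebra C ar sig q e \<Longrightarrow> 1 \<le> i \<Longrightarrow> e i \<in> C"
  using ca_parts(1) by blast

lemma ca_q: "clone_algebra C ar sig q e \<Longrightarrow> x \<in> C \<Longrightarrow> length ys = n \<Longrightarrow> set ys \<subseteq> C \<Longrightarrow> q n x ys \<in> C"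
  using ca_parts(2) by blast

lemma ca_C1: "clone_algebra C ar sig q e \<Longrightarrow> length xs = n \<Longrightarrow> set xs \<subseteq> C \<Longrightarrow> 1 \<le> i \<Longrightarrow> i \<le> n
   \<Longrightarrow> q n (e i) xs = xs ! (i - 1)"
  using ca_parts(3) by blast

lemma ca_C4: "clone_algebra C ar sig q e \<Longrightarrow> n > k \<Longrightarrow> x \<in> C \<Longrightarrow> length ys = k \<Longrightarrow> set ys \<subseteq> C \<Longrightarrow>
          q k x ys = q n x (ys @ map e [k+1..<n+1])"
  using ca_parts(4) by blast

lemma ca_C5: "clone_algebra C ar sig q e \<Longrightarrow> x \<in> C \<Longrightarrow> length ys = n \<Longrightarrow> set ys \<subseteq> C \<Longrightarrow> length zs = n \<Longrightarrow> set zs \<subseteq> C \<Longrightarrow>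
          q n (q n x ys) zs = q n x (map (\<lambda>y. q n y zs) ys)"
  using ca_parts(5) by blast

lemma cg_pair: "(a, b) \<in> cg C ar sig q a b"
  unfolding cg_def by (rule InterI) simp

lemma cong_equiv: "is_congruence C ar sig q \<theta> \<Longrightarrow> equiv C \<theta>"
  unfolding is_congruence_def by (elim conjE)

lemma cg_sym: "(x, y) \<in> cg C ar sig q a b \<Longrightarrow> (y, x) \<in> cg C ar sig q a b"
  unfolding cg_def
proof (rule InterI)
  fix \<theta> assume x: "(x, y) \<in> \<Inter> {\<theta>. is_congruence C ar sig q \<theta> \<and> (a, b) \<in> \<theta>}"
    and t: "\<theta> \<in> {\<theta>. is_congruence C ar sig q \<theta> \<and> (a, b) \<in> \<theta>}"
  from x t have "(x, y) \<in> \<theta>" by blast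
  moreover have "sym \<theta>" using t cong_equiv[of C ar sig q \<theta>] unfolding equiv_def by blast
  ultimately show "(y, x) \<in> \<theta>" by (rule symD[rotated])
qed

lemma cg_trans: "(x, y) \<in> cg C ar sig q a b \<Longrightarrow> (y, z) \<in> cg C ar sig q a b \<Longrightarrow> (x, z) \<in> cg C ar sig q a b"
  unfolding cg_def
proof (rule InterI)
  fix \<theta> assume x: "(x, y) \<in> \<Inter> {\<theta>. is_congruence C ar sig q \<theta> \<and> (a, b) \<in> \<theta>}"
    and y: "(y, z) \<in> \<Inter> {\<theta>. is_congruence C ar sig q \<theta> \<and> (a, b) \<in> \<theta>}"
    and t: "\<theta> \<in> {\<theta>. is_congruence C ar sig q \<theta> \<and> (a, b) \<in> \<theta>}"
  from x t have "(x, y) \<in> \<theta>" by blast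
  moreover from y t have "(y, z) \<in> \<theta>" by blast
  moreover have "trans \<theta>" using t cong_equiv[of C ar sig q \<theta>] unfolding equiv_def by blast
  ultimately show "(x, z) \<in> \<theta>" by (meson transD)
qed

lemma cong_q2: assumes "is_congruence C ar sig q \<theta>" "(x, y) \<in> \<theta>" "length xs = n" "set xs \<subseteq> C"
  shows "(q n x xs, q n y xs) \<in> \<theta>"
proof -
  have eq: "equiv C \<theta>" using assms(1) unfolding is_congruence_def by blast
  hence sub: "\<theta> \<subseteq> C \<times> C" and rf: "\<And>z. z \<in> C \<Longrightarrow> (z, z) \<in> \<theta>"
    unfolding equiv_def refl_on_def by blast+
  have "list_all2 (\<lambda>x y. (x, y) \<in> \<theta>) xs xs"
    by (rule list.rel_refl_strong) (use assms(4) rf in blast)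
  moreover have "x \<in> C" "y \<in> C" using sub assms(2) by blast+
  moreover have "\<forall>n x y xs ys. x \<in> C \<and> y \<in> C \<and> (x, y) \<in> \<theta> \<and> length xs = n \<and> length ys = n
          \<and> set xs \<subseteq> C \<and> set ys \<subseteq> C \<and> list_all2 (\<lambda>x y. (x, y) \<in> \<theta>) xs ys
          \<longrightarrow> (q n x xs, q n y ys) \<in> \<theta>" using assms(1) unfolding is_congruence_def by (elim conjE)
  ultimately show ?thesis using assms(2,3,4) by blast
qed

lemma cg_q: "(x, y) \<in> cg C ar sig q a b \<Longrightarrow> length xs = n \<Longrightarrow> set xs \<subseteq> C
   \<Longrightarrow> (q n x xs, q n y xs) \<in> cg C ar sig q a b"
  unfolding cg_def
proof (rule InterI)
  fix \<theta> assume x: "(x, y) \<in> \<Inter> {\<theta>. is_congruence C ar sig q \<theta> \<and> (a, b) \<in> \<theta>}"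
    and l: "length xs = n" "set xs \<subseteq> C" and t: "\<theta> \<in> {\<theta>. is_congruence C ar sig q \<theta> \<and> (a, b) \<in> \<theta>}"
  from x t have "(x, y) \<in> \<theta>" by blast
  with t l show "(q n x xs, q n y xs) \<in> \<theta>" using cong_q2[of C ar sig q \<theta> x y xs n] by blast
qed

lemma cg_refl: "z \<in> C \<Longrightarrow> (z, z) \<in> cg C ar sig q a b"
  unfolding cg_def
proof (rule InterI)
  fix \<theta> assume z: "z \<in> C" and t: "\<theta> \<in> {\<theta>. is_congruence C ar sig q \<theta> \<and> (a, b) \<in> \<theta>}"
  have "refl_on C \<theta>" using t cong_equiv[of C ar sig q \<theta>] unfolding equiv_def by blast
  with z show "(z, z) \<in> \<theta>" unfolding refl_on_def by blast
qed

lemma indep_shift: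
  assumes ca: "clone_algebra C ar sig q e" and cC: "c \<in> C" and j: "1 \<le> j" "j \<le> n"
    and ind: "independent q e c j" and zs: "length zs = n" "set zs \<subseteq> C"
  shows "q n c zs = q (n+1) c ((zs @ [e (n+1)])[j-1 := (zs @ [e (n+1)]) ! j])"
proof -
  define zs' where "zs' = zs @ [e (n+1)]"
  define ws where "ws = map e [1..<j] @ [e (j+1)]"
  define W where "W = map (\<lambda>k. e (if k = j-1 then j+1 else k+1)) [0..<n+1]"
  have eC: "\<And>i. 1 \<le> i \<Longrightarrow> e i \<in> C" using ca_e[OF ca] .
  have zs'C: "set zs' \<subseteq> C" "length zs' = n+1" using zs eC unfolding zs'_def by auto
  have wsC: "set ws \<subseteq> C" "length ws = j" using eC j unfolding ws_def by auto
  have WC: "set W \<subseteq> C" "length W = n+1" using eC unfolding W_def by auto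
  have 1: "q n c zs = q (n+1) c zs'"
    using ca_C4[OF ca, of n "n+1" c zs] cC zs unfolding zs'_def by simp
  have 2: "c = q j c ws" using ind unfolding independent_def ws_def by simp
  have Weq: "W = ws @ map e [j+1..<n+1+1]"
  proof (rule nth_equalityI)
    show "length W = length (ws @ map e [j+1..<n+1+1])" using WC wsC j by simp
  next
    fix k assume "k < length W"
    hence k: "k < n+1" using WC by simp
    show "W ! k = (ws @ map e [j+1..<n+1+1]) ! k"
    proof (cases "k < j")
      case True
      then show ?thesis unfolding W_def ws_def using k j
        by (auto simp: nth_append)
    next
      case False
      have "(ws @ map e [j+1..<n+1+1]) ! k = map e [j+1..<n+1+1] ! (k - j)"
        using False wsC by (simp add: nth_append)
      also have "\<dots> = e (j+1+(k-j))" using k False by (simp del: upt_Suc add: nth_upt)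
      also have "\<dots> = W ! k"
      proof -
        have "k \<noteq> j - 1" using False j by simp
        then show ?thesis unfolding W_def using k False by (simp del: upt_Suc)
      qed
      finally show ?thesis by simp
    qed
  qed
  have 3: "q j c ws = q (n+1) c W"
    using ca_C4[OF ca, of j "n+1" c ws] cC wsC j Weq by simp
  have 4: "q (n+1) c zs' = q (n+1) c (map (\<lambda>w. q (n+1) w zs') W)"
    using ca_C5[OF ca, of c W "n+1" zs'] cC WC zs'C 2 3 by simp
  have 5: "map (\<lambda>w. q (n+1) w zs') W = zs'[j-1 := zs' ! j]"
  proof (rule nth_equalityI)
    show "length (map (\<lambda>w. q (n+1) w zs') W) = length (zs'[j-1 := zs' ! j])" using WC zs'C by simp
  next
    fix k assume "k < length (map (\<lambda>w. q (n+1) w zs') W)"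
    hence k: "k < n+1" using WC by simp
    have "map (\<lambda>w. q (n+1) w zs') W ! k = q (n+1) (e (if k = j-1 then j+1 else k+1)) zs'"
      unfolding W_def using k by (simp del: upt_Suc)
    also have "\<dots> = zs' ! ((if k = j-1 then j+1 else k+1) - 1)"
      by (rule ca_C1[OF ca]) (use zs'C j k in auto)
    also have "\<dots> = zs'[j-1 := zs' ! j] ! k" using k zs'C j by auto
    finally show "map (\<lambda>w. q (n+1) w zs') W ! k = zs'[j-1 := zs' ! j] ! k" .
  qed
  show ?thesis using 1 4 5 unfolding zs'_def by simp
qed

lemma indep_upd:
  assumes ca: "clone_algebra C ar sig q e" and cC: "c \<in> C" and j: "1 \<le> j" "j \<le> n"
    and ind: "independent q e c j" and zs: "length zs = n" "set zs \<subseteq> C" and y: "y \<in> C"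
  shows "q n c (zs[j-1 := y]) = q n c zs"
proof -
  have a: "set (zs[j-1 := y]) \<subseteq> C" using zs y by (meson dual_order.trans set_update_subset_insert insert_subset)
  have "q n c (zs[j-1 := y]) = q (n+1) c ((zs[j-1 := y] @ [e (n+1)])[j-1 := (zs[j-1 := y] @ [e (n+1)]) ! j])"
    using indep_shift[OF ca cC j ind _ a] zs by simp
  also have "\<dots> = q (n+1) c ((zs @ [e (n+1)])[j-1 := (zs @ [e (n+1)]) ! j])"
  proof -
    have "zs[j-1 := y] @ [e (n+1)] = (zs @ [e (n+1)])[j-1 := y]"
      using j zs by (simp add: list_update_append1)
    moreover have "(zs @ [e (n+1)])[j-1 := y] ! j = (zs @ [e (n+1)]) ! j"
      using j by (simp add: nth_list_update_neq)
    ultimately show ?thesis by simp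
  qed
  also have "\<dots> = q n c zs" using indep_shift[OF ca cC j ind zs] by simp
  finally show ?thesis .
qed

definition sepr where
  "sepr C ar sig q e c n \<longleftrightarrow> (\<forall>x\<in>C. \<forall>y\<in>C. (\<forall>i\<in>{1..n}. (x, y) \<in> cg C ar sig q c (e i)) \<longrightarrow> x = y)"

lemma sep_of_central: "n_central C ar sig q e c n \<Longrightarrow> sepr C ar sig q e c n"
  unfolding n_central_def sepr_def by (elim conjE)

lemma q_rel:
  assumes ca: "clone_algebra C ar sig q e" and i: "1 \<le> i" "i \<le> n" and as: "length as = n" "set as \<subseteq> C"
  shows "(q n c as, as ! (i - 1)) \<in> cg C ar sig q c (e i)"
proof -
  have "(q n c as, q n (e i) as) \<in> cg C ar sig q c (e i)"
    using cg_q[OF cg_pair as] .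
  moreover have "q n (e i) as = as ! (i - 1)" using ca_C1[OF ca as i] .
  ultimately show ?thesis by simp
qed

lemma central_of_sep:
  assumes ca: "clone_algebra C ar sig q e" and cC: "c \<in> C" and sp: "sepr C ar sig q e c m"
  shows "n_central C ar sig q e c m"
  unfolding n_central_def
proof (intro conjI allI impI)
  show "c \<in> C" by fact
  show "\<forall>x\<in>C. \<forall>y\<in>C. (\<forall>i\<in>{1..m}. (x, y) \<in> cg C ar sig q c (e i)) \<longrightarrow> x = y"
    using sp unfolding sepr_def .
  fix as :: "'a list" assume as: "length as = m \<and> set as \<subseteq> C"
  show "\<exists>!u. u \<in> C \<and> (\<forall>i\<in>{1..m}. (as ! (i - 1), u) \<in> cg C ar sig q c (e i))"
  proof (rule ex_ex1I)
    show "\<exists>u. u \<in> C \<and> (\<forall>i\<in>{1..m}. (as ! (i - 1), u) \<in> cg C ar sig q c (e i))"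
    proof (intro exI conjI ballI)
      show "q m c as \<in> C" using ca_q[OF ca cC] as by blast
      fix i assume "i \<in> {1..m}"
      then show "(as ! (i - 1), q m c as) \<in> cg C ar sig q c (e i)"
        using q_rel[OF ca, of i m as c] as by (auto intro: cg_sym)
    qed
  next
    fix u v assume u: "u \<in> C \<and> (\<forall>i\<in>{1..m}. (as ! (i - 1), u) \<in> cg C ar sig q c (e i))"
      and v: "v \<in> C \<and> (\<forall>i\<in>{1..m}. (as ! (i - 1), v) \<in> cg C ar sig q c (e i))"
    have "\<forall>i\<in>{1..m}. (u, v) \<in> cg C ar sig q c (e i)"
    proof
      fix i assume i: "i \<in> {1..m}"
      have "(u, as ! (i - 1)) \<in> cg C ar sig q c (e i)" using u i by (blast intro: cg_sym)
      moreover have "(as ! (i - 1), v) \<in> cg C ar sig q c (e i)" using v i by blast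
      ultimately show "(u, v) \<in> cg C ar sig q c (e i)" by (rule cg_trans)
    qed
    then show "u = v" using sp u v unfolding sepr_def by blast
  qed
qed

lemma indep_of_sep:
  assumes ca: "clone_algebra C ar sig q e" and cC: "c \<in> C" and sp: "sepr C ar sig q e c m" and j: "j > m"
  shows "independent q e c j"
proof -
  define ws where "ws = map e [1..<j] @ [e (j+1)]"
  have wsC: "set ws \<subseteq> C" "length ws = j" using ca_e[OF ca] j unfolding ws_def by auto
  have xC: "q j c ws \<in> C" using ca_q[OF ca cC wsC(2,1)] .
  have "\<forall>i\<in>{1..m}. (q j c ws, c) \<in> cg C ar sig q c (e i)"
  proof
    fix i assume i: "i \<in> {1..m}"
    have "(q j c ws, ws ! (i - 1)) \<in> cg C ar sig q c (e i)"
      using q_rel[OF ca, of i j ws c] i j wsC by auto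
    moreover have "ws ! (i - 1) = e i" unfolding ws_def using i j by (auto simp: nth_append)
    moreover have "(e i, c) \<in> cg C ar sig q c (e i)" using cg_sym[OF cg_pair] .
    ultimately show "(q j c ws, c) \<in> cg C ar sig q c (e i)" using cg_trans by metis
  qed
  hence "q j c ws = c" using sp xC cC unfolding sepr_def by blast
  thus ?thesis unfolding independent_def ws_def by simp
qed

lemma full_rel:
  assumes ca: "clone_algebra C ar sig q e" and cC: "c \<in> C" and sp: "sepr C ar sig q e c n"
    and j: "1 \<le> j" "j \<le> n" and ind: "independent q e c j" and x: "x \<in> C" and y: "y \<in> C"
  shows "(x, y) \<in> cg C ar sig q c (e j)"
proof -
  define xs where "xs = replicate n x"
  have xsC: "length xs = n" "set xs \<subseteq> C" using x unfolding xs_def by auto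
  have "\<forall>i\<in>{1..n}. (q n c xs, x) \<in> cg C ar sig q c (e i)"
  proof
    fix i assume i: "i \<in> {1..n}"
    show "(q n c xs, x) \<in> cg C ar sig q c (e i)"
      using q_rel[OF ca, of i n xs c] i xsC unfolding xs_def by auto
  qed
  hence qx: "q n c xs = x" using sp x ca_q[OF ca cC xsC] unfolding sepr_def by blast
  have ys: "length (xs[j-1 := y]) = n" "set (xs[j-1 := y]) \<subseteq> C"
    using xsC y by (auto dest: set_update_subset_insert[THEN subsetD])
  have "(q n c (xs[j-1 := y]), xs[j-1 := y] ! (j - 1)) \<in> cg C ar sig q c (e j)"
    using q_rel[OF ca j ys] .
  moreover have "xs[j-1 := y] ! (j - 1) = y" using xsC j by simp
  moreover have "q n c (xs[j-1 := y]) = x" using indep_upd[OF ca cC j ind xsC y] qx by simp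
  ultimately show ?thesis by simp
qed

lemma gamma_le:
  "gamma q e c \<le> enat m \<longleftrightarrow> (\<forall>j>m. independent q e c j)"
proof
  assume g: "gamma q e c \<le> enat m"
  show "\<forall>j>m. independent q e c j"
  proof (intro allI impI)
    fix j assume j: "j > m"
    show "independent q e c j"
    proof (rule ccontr)
      assume "\<not> independent q e c j"
      hence jd: "j \<in> dep_set q e c" using j unfolding dep_set_def by simp
      show False
      proof (cases "finite (dep_set q e c)")
        case False then show False using g unfolding gamma_def by simp
      next
        case True
        hence "j \<le> Max (dep_set q e c)" using jd by simp
        moreover have "gamma q e c = enat (Max (dep_set q e c))" using True jd unfolding gamma_def by auto
        ultimately show False using g j by simp
      qed
    qed
  qed
next
  assume a: "\<forall>j>m. independent q e c j"
  have sub: "dep_set q e c \<subseteq> {..m}" using a unfolding dep_set_def by (auto simp: not_less[symmetric])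
  hence fin: "finite (dep_set q e c)" using finite_subset by blast
  show "gamma q e c \<le> enat m"
  proof (cases "dep_set q e c = {}")
    case True then show ?thesis unfolding gamma_def using fin by simp
  next
    case False
    hence "Max (dep_set q e c) \<le> m" using fin sub by auto
    then show ?thesis unfolding gamma_def using fin False by simp
  qed
qed

theorem proposition11p3:
  fixes C :: "'a set" and ar :: "'s \<Rightarrow> nat" and sig :: "'s \<Rightarrow> 'a list \<Rightarrow> 'a"
    and q :: "nat \<Rightarrow> 'a \<Rightarrow> 'a list \<Rightarrow> 'a" and e :: "nat \<Rightarrow> 'a"
    and c :: 'a and n m :: nat
  assumes "clone_algebra C ar sig q e"
    and "c \<in> C"
    and "n_central C ar sig q e c n"
    and "m \<ge> 1"
  shows "n_central C ar sig q e c m \<longleftrightarrow> enat m \<ge> gamma q e c"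
proof
  assume "n_central C ar sig q e c m"
  hence "sepr C ar sig q e c m" by (rule sep_of_central)
  hence "\<forall>j>m. independent q e c j" using indep_of_sep[OF assms(1,2)] by simp
  thus "enat m \<ge> gamma q e c" using gamma_le[of q e c m] by simp
next
  assume "enat m \<ge> gamma q e c"
  hence ind: "\<forall>j>m. independent q e c j" using gamma_le[of q e c m] by simp
  have spn: "sepr C ar sig q e c n" using sep_of_central[OF assms(3)] .
  have "sepr C ar sig q e c m"
    unfolding sepr_def
  proof (intro ballI impI)
    fix x y assume x: "x \<in> C" and y: "y \<in> C" and r: "\<forall>i\<in>{1..m}. (x, y) \<in> cg C ar sig q c (e i)"
    have "\<forall>i\<in>{1..n}. (x, y) \<in> cg C ar sig q c (e i)"
    proof
      fix i assume i: "i \<in> {1..n}"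
      show "(x, y) \<in> cg C ar sig q c (e i)"
      proof (cases "i \<le> m")
        case True then show ?thesis using r i by auto
      next
        case False
        hence "independent q e c i" using ind by simp
        moreover have "1 \<le> i" "i \<le> n" using i by auto
        ultimately show ?thesis using full_rel[OF assms(1,2) spn, of i x y] x y by simp
      qed
    qed
    then show "x = y" using spn x y unfolding sepr_def by blast
  qed
  then show "n_central C ar sig q e c m" by (rule central_of_sep[OF assms(1,2)])
qed

end
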